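(* Let $(G,u,v,\alpha,\beta)$ be a Guvab with $\beta=1$. Then either $\{W_{2k}\}$ is eventually constant, or there exist constants $c_e,\lambda_e$ such that $\left|W_{2k}-\lim_{k\to\infty}W_{2k}\right|\sim c_e\cdot\lambda_e^{2k}$. Also, either $\{W_{2k+1}\}$ is eventually constant, or there exist constants $c_o,\lambda_o$ such that $\left|W_{2k+1}-\lim_{k\to\infty}W_{2k+1}\right|\sim c_o\cdot\lambda_o^{2k+1}$.
   Context: A Guvab is a tuple $(G,u,v,\alpha,\beta)$ where $G$ is a finite, connected, simple graph, $u,v\in V(G)$, and $\alpha,\beta\in[0,1]$ with $\alpha\le\beta$. A random walk on $G$ with starting vertex $w$ and laziness $\gamma$ is the Markov chain $R_0=w$ and, for $i\ge1$, $R_i=R_{i-1}$ with probability $\gamma$ and $R_i=t$ with probability $\frac{1-\gamma}{\deg(R_{i-1})}$ for each neighbor $t$ of $R_{i-1}$. $\mu_k$ is the distribution after $k$ steps of the walk from $u$ with laziness $\alpha$, $\nu_k$ that of the walk from $v$ with laziness $\beta$, and $W_k=W(\mu_k,\nu_k)$ is the Wasserstein ($L^1$ optimal transport) distance with respect to the graph distance. A sequence $\{S_i\}$ is eventually constant if there is $N$ with $S_k=S_N$ for all $k\ge N$; $a_k\sim b_k$ means $a_k/b_k\to1$. The limits $\lim_k W_{2k}$ and $\lim_k W_{2k+1}$ exist. *)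

theory Defs
  imports "HOL-Analysis.Analysis" "HOL-Library.Landau_Symbols"
begin

definition simple_graph :: "'a set \<Rightarrow> ('a \<Rightarrow> 'a \<Rightarrow> bool) \<Rightarrow> bool" where
  "simple_graph V E \<longleftrightarrow> finite V \<and>
     (\<forall>x y. E x y \<longrightarrow> x \<in> V \<and> y \<in> V) \<and>
     (\<forall>x y. E x y \<longrightarrow> E y x) \<and> (\<forall>x. \<not> E x x)"

definition connected_graph :: "'a set \<Rightarrow> ('a \<Rightarrow> 'a \<Rightarrow> bool) \<Rightarrow> bool" where
  "connected_graph V E \<longleftrightarrow> (\<forall>x\<in>V. \<forall>y\<in>V. E\<^sup>*\<^sup>* x y)"

definition deg :: "'a set \<Rightarrow> ('a \<Rightarrow> 'a \<Rightarrow> bool) \<Rightarrow> 'a \<Rightarrow> nat" where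
  "deg V E s = card {t\<in>V. E s t}"

definition gdist :: "('a \<Rightarrow> 'a \<Rightarrow> bool) \<Rightarrow> 'a \<Rightarrow> 'a \<Rightarrow> nat" where
  "gdist E x y = (LEAST n. (E ^^ n) x y)"

definition walk_step :: "'a set \<Rightarrow> ('a \<Rightarrow> 'a \<Rightarrow> bool) \<Rightarrow> real \<Rightarrow> ('a \<Rightarrow> real) \<Rightarrow> ('a \<Rightarrow> real)" where
  "walk_step V E \<gamma> p = (\<lambda>t. \<gamma> * p t +
      (\<Sum>s\<in>V. if E s t then (1 - \<gamma>) / real (deg V E s) * p s else 0))"

definition walk_dist :: "'a set \<Rightarrow> ('a \<Rightarrow> 'a \<Rightarrow> bool) \<Rightarrow> real \<Rightarrow> 'a \<Rightarrow> nat \<Rightarrow> ('a \<Rightarrow> real)" where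
  "walk_dist V E \<gamma> w k = (walk_step V E \<gamma> ^^ k) (\<lambda>t. if t = w then 1 else 0)"

definition coupling :: "'a set \<Rightarrow> ('a \<Rightarrow> real) \<Rightarrow> ('a \<Rightarrow> real) \<Rightarrow> ('a \<Rightarrow> 'a \<Rightarrow> real) \<Rightarrow> bool" where
  "coupling V \<mu> \<nu> \<pi> \<longleftrightarrow> (\<forall>x\<in>V. \<forall>y\<in>V. \<pi> x y \<ge> 0) \<and>
     (\<forall>x\<in>V. (\<Sum>y\<in>V. \<pi> x y) = \<mu> x) \<and> (\<forall>y\<in>V. (\<Sum>x\<in>V. \<pi> x y) = \<nu> y)"

definition wasserstein :: "'a set \<Rightarrow> ('a \<Rightarrow> 'a \<Rightarrow> bool) \<Rightarrow> ('a \<Rightarrow> real) \<Rightarrow> ('a \<Rightarrow> real) \<Rightarrow> real" where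
  "wasserstein V E \<mu> \<nu> = Inf {(\<Sum>x\<in>V. \<Sum>y\<in>V. \<pi> x y * real (gdist E x y)) | \<pi>. coupling V \<mu> \<nu> \<pi>}"

definition W :: "'a set \<Rightarrow> ('a \<Rightarrow> 'a \<Rightarrow> bool) \<Rightarrow> 'a \<Rightarrow> 'a \<Rightarrow> real \<Rightarrow> real \<Rightarrow> nat \<Rightarrow> real" where
  "W V E u v \<alpha> \<beta> k = wasserstein V E (walk_dist V E \<alpha> u k) (walk_dist V E \<beta> v k)"

definition eventually_const :: "(nat \<Rightarrow> real) \<Rightarrow> bool" where
  "eventually_const S \<longleftrightarrow> (\<exists>N. \<forall>k\<ge>N. S k = S N)"

end

theory Submission
  imports Defs "HOL-Computational_Algebra.Fundamental_Theorem_Algebra"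
begin


definition cop :: "'a set \<Rightarrow> ('a \<Rightarrow> 'a \<Rightarrow> real) \<Rightarrow> ('a \<Rightarrow> complex) \<Rightarrow> ('a \<Rightarrow> complex)" where
  "cop X K z = (\<lambda>x. \<Sum>y\<in>X. complex_of_real (K x y) * z y)"

definition polyop :: "'a set \<Rightarrow> ('a \<Rightarrow> 'a \<Rightarrow> real) \<Rightarrow> complex poly \<Rightarrow> ('a \<Rightarrow> complex) \<Rightarrow> ('a \<Rightarrow> complex)" where
  "polyop X K p z = (\<lambda>x. \<Sum>j\<le>degree p. coeff p j * (cop X K ^^ j) z x)"

lemma cop_cong: "(\<And>y. y \<in> X \<Longrightarrow> u y = v y) \<Longrightarrow> cop X K u x = cop X K v x"
  unfolding cop_def by (auto intro!: sum.cong)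

lemma polyop_le:
  assumes "degree p \<le> N"
  shows "polyop X K p z x = (\<Sum>j\<le>N. coeff p j * (cop X K ^^ j) z x)"
  unfolding polyop_def
  by (rule sum.mono_neutral_left) (use assms in \<open>auto simp: coeff_eq_0\<close>)

lemma polyop_pCons:
  "polyop X K (pCons a p) z x = a * z x + cop X K (polyop X K p z) x"
proof -
  have "polyop X K (pCons a p) z x = (\<Sum>j\<le>Suc (degree p). coeff (pCons a p) j * (cop X K ^^ j) z x)"
    by (rule polyop_le) (simp add: degree_pCons_le)
  also have "\<dots> = a * z x + (\<Sum>j\<le>degree p. coeff p j * (cop X K ^^ Suc j) z x)"
    by (subst sum.atMost_Suc_shift) simp
  also have "(\<Sum>j\<le>degree p. coeff p j * (cop X K ^^ Suc j) z x) = cop X K (polyop X K p z) x"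
    unfolding polyop_def cop_def
    by (simp add: sum_distrib_left sum_distrib_right mult_ac sum.swap[of _ X])
  finally show ?thesis .
qed

lemma polyop_0 [simp]: "polyop X K 0 z x = 0"
  by (simp add: polyop_def)

lemma polyop_add: "polyop X K (p + q) z x = polyop X K p z x + polyop X K q z x"
proof -
  let ?N = "max (degree p) (degree q)"
  have "polyop X K (p + q) z x = (\<Sum>j\<le>?N. coeff (p+q) j * (cop X K ^^ j) z x)"
    by (rule polyop_le) (simp add: degree_add_le)
  also have "\<dots> = (\<Sum>j\<le>?N. coeff p j * (cop X K ^^ j) z x) + (\<Sum>j\<le>?N. coeff q j * (cop X K ^^ j) z x)"
    by (simp add: sum.distrib distrib_right)
  also have "\<dots> = polyop X K p z x + polyop X K q z x"
    by (simp add: polyop_le[of p ?N] polyop_le[of q ?N])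
  finally show ?thesis .
qed

lemma polyop_smult: "polyop X K (smult c p) z x = c * polyop X K p z x"
proof -
  have "polyop X K (smult c p) z x = (\<Sum>j\<le>degree p. coeff (smult c p) j * (cop X K ^^ j) z x)"
    by (rule polyop_le) simp
  then show ?thesis by (simp add: polyop_def sum_distrib_left mult_ac)
qed

lemma cop_lin: "cop X K (\<lambda>x. c * u x + v x) x = c * cop X K u x + cop X K v x"
  unfolding cop_def by (simp add: sum.distrib sum_distrib_left algebra_simps)

lemma polyop_mult: "polyop X K (p * q) z x = polyop X K p (polyop X K q z) x"
proof (induction p arbitrary: x rule: pCons_induct)
  case 0
  then show ?case by simp
next
  case (pCons a p)
  have "polyop X K (pCons a p * q) z x = a * polyop X K q z x + cop X K (polyop X K (p * q) z) x"
    by (simp add: polyop_add polyop_smult polyop_pCons)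
  also have "cop X K (polyop X K (p * q) z) x = cop X K (polyop X K p (polyop X K q z)) x"
    using pCons.IH by (intro cop_cong) auto
  finally show ?case by (simp add: polyop_pCons)
qed

lemma polyop_one: "polyop X K 1 z x = z x"
  by (simp add: polyop_def)

lemma polyop_lin: "polyop X K [:-a, 1:] z x = cop X K z x - a * z x"
  by (simp add: polyop_pCons cop_def)

lemma lin_dep:
  fixes v :: "'j \<Rightarrow> 'a \<Rightarrow> 'b::field"
  assumes "finite X" "finite J" "card X < card J"
  shows "\<exists>c. (\<exists>j\<in>J. c j \<noteq> 0) \<and> (\<forall>x\<in>X. (\<Sum>j\<in>J. c j * v j x) = 0)"
  using assms
proof (induction X arbitrary: J v rule: finite_induct)
  case empty
  then have "J \<noteq> {}" by auto
  then show ?case by (intro exI[of _ "\<lambda>_. 1"]) auto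
next
  case (insert x X)
  show ?case
  proof (cases "\<forall>j\<in>J. v j x = 0")
    case True
    from insert.IH[of J v] insert.prems insert.hyps obtain c where
      c: "\<exists>j\<in>J. c j \<noteq> 0" "\<forall>y\<in>X. (\<Sum>j\<in>J. c j * v j y) = 0" by auto
    show ?thesis using c True by (intro exI[of _ c]) auto
  next
    case False
    then obtain j0 where j0: "j0 \<in> J" "v j0 x \<noteq> 0" by auto
    define J' where "J' = J - {j0}"
    define w where "w = (\<lambda>j y. v j y - (v j x / v j0 x) * v j0 y)"
    have cJ': "card X < card J'" using insert.prems insert.hyps j0 unfolding J'_def
      by (simp add: card_Diff_singleton)
    from insert.IH[of J' w] insert.prems cJ' obtain d where
      d: "\<exists>j\<in>J'. d j \<noteq> 0" "\<forall>y\<in>X. (\<Sum>j\<in>J'. d j * w j y) = 0"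
      unfolding J'_def by auto
    define S where "S = (\<Sum>j\<in>J'. d j * v j x)"
    define c where "c = (\<lambda>j. if j = j0 then - S / v j0 x else d j)"
    have fin: "finite J'" using insert.prems unfolding J'_def by auto
    have split: "(\<Sum>j\<in>J. c j * v j y) = c j0 * v j0 y + (\<Sum>j\<in>J'. d j * v j y)" for y
    proof -
      have "(\<Sum>j\<in>J. c j * v j y) = c j0 * v j0 y + (\<Sum>j\<in>J'. c j * v j y)"
        unfolding J'_def using j0 insert.prems by (simp add: sum.remove)
      also have "(\<Sum>j\<in>J'. c j * v j y) = (\<Sum>j\<in>J'. d j * v j y)"
        unfolding J'_def c_def by (intro sum.cong) auto
      finally show ?thesis .
    qed
    have "\<forall>y\<in>insert x X. (\<Sum>j\<in>J. c j * v j y) = 0"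
    proof
      fix y assume y: "y \<in> insert x X"
      show "(\<Sum>j\<in>J. c j * v j y) = 0"
      proof (cases "y = x")
        case True
        then show ?thesis using j0 unfolding split by (simp add: c_def S_def)
      next
        case False
        with y have yX: "y \<in> X" by auto
        have "(\<Sum>j\<in>J'. d j * w j y) = (\<Sum>j\<in>J'. d j * v j y) - S / v j0 x * v j0 y"
          unfolding w_def S_def by (simp add: algebra_simps sum_subtractf sum_distrib_left sum_divide_distrib sum_distrib_right)
        with d(2) yX have "(\<Sum>j\<in>J'. d j * v j y) = S / v j0 x * v j0 y" by auto
        then show ?thesis unfolding split by (simp add: c_def)
      qed
    qed
    moreover have "\<exists>j\<in>J. c j \<noteq> 0" using d(1) unfolding c_def J'_def by auto
    ultimately show ?thesis by blast
  qed
qed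



definition ip :: "'a set \<Rightarrow> ('a \<Rightarrow> real) \<Rightarrow> ('a \<Rightarrow> complex) \<Rightarrow> ('a \<Rightarrow> complex) \<Rightarrow> complex" where
  "ip X w u v = (\<Sum>x\<in>X. complex_of_real (w x) * u x * cnj (v x))"

definition rev_kernel :: "'a set \<Rightarrow> ('a \<Rightarrow> real) \<Rightarrow> ('a \<Rightarrow> 'a \<Rightarrow> real) \<Rightarrow> bool" where
  "rev_kernel X w K \<longleftrightarrow> finite X \<and> (\<forall>x\<in>X. w x > 0) \<and> (\<forall>x\<in>X. \<forall>y\<in>X. w x * K x y = w y * K y x)"

lemma ip_cong: "(\<And>x. x \<in> X \<Longrightarrow> u x = u' x) \<Longrightarrow> (\<And>x. x \<in> X \<Longrightarrow> v x = v' x) \<Longrightarrow> ip X w u v = ip X w u' v'"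
  unfolding ip_def by (auto intro!: sum.cong)

lemma ip_lin: "ip X w (\<lambda>x. c1 * u1 x + c2 * u2 x) v = c1 * ip X w u1 v + c2 * ip X w u2 v"
  unfolding ip_def by (simp add: sum.distrib sum_distrib_left algebra_simps)

lemma ip_scale2: "ip X w u (\<lambda>x. c * v x) = cnj c * ip X w u v"
  unfolding ip_def by (simp add: sum_distrib_left algebra_simps)

lemma ip_selfadj:
  assumes "rev_kernel X w K"
  shows "ip X w (cop X K u) v = ip X w u (cop X K v)"
proof -
  have rv: "\<And>x y. x \<in> X \<Longrightarrow> y \<in> X \<Longrightarrow> w x * K x y = w y * K y x"
    using assms unfolding rev_kernel_def by auto
  have L: "ip X w (cop X K u) v = (\<Sum>x\<in>X. \<Sum>y\<in>X. complex_of_real (w x * K x y) * u y * cnj (v x))"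
    by (simp add: ip_def cop_def sum_distrib_left sum_distrib_right mult_ac)
  have "ip X w u (cop X K v) = (\<Sum>x\<in>X. \<Sum>y\<in>X. complex_of_real (w x * K x y) * u x * cnj (v y))"
    by (simp add: ip_def cop_def cnj_sum sum_distrib_left sum_distrib_right mult_ac)
  also have "\<dots> = (\<Sum>y\<in>X. \<Sum>x\<in>X. complex_of_real (w x * K x y) * u x * cnj (v y))"
    by (rule sum.swap)
  also have "\<dots> = (\<Sum>y\<in>X. \<Sum>x\<in>X. complex_of_real (w y * K y x) * u x * cnj (v y))"
    by (intro sum.cong refl) (simp add: rv)
  finally show ?thesis using L by simp
qed

lemma ip_self: "ip X w u u = complex_of_real (\<Sum>x\<in>X. w x * (cmod (u x))^2)"
proof -
  have "complex_of_real (w x) * u x * cnj (u x) = complex_of_real (w x * (cmod (u x))^2)" for x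
    by (simp only: of_real_mult complex_norm_square mult.assoc)
  then show ?thesis unfolding ip_def of_real_sum by (intro sum.cong refl)
qed

lemma ip_self_zero:
  assumes "rev_kernel X w K" "ip X w u u = 0" "x \<in> X"
  shows "u x = 0"
proof -
  have fin: "finite X" and wp: "\<forall>x\<in>X. w x > 0" using assms(1) unfolding rev_kernel_def by auto
  have "(\<Sum>x\<in>X. w x * (cmod (u x))^2) = 0" using assms(2) unfolding ip_self of_real_eq_0_iff .
  moreover have "\<forall>x\<in>X. 0 \<le> w x * (cmod (u x))^2" using wp by (simp add: less_imp_le)
  ultimately have "\<forall>x\<in>X. w x * (cmod (u x))^2 = 0" using sum_nonneg_eq_0_iff[OF fin, of "\<lambda>x. w x * (cmod (u x))^2"] by blast
  then have "w x * (cmod (u x))^2 = 0" using assms(3) by blast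
  moreover have "w x > 0" using wp assms(3) by blast
  ultimately show ?thesis by simp
qed

lemma hermitian_real:
  assumes "rev_kernel X w K" "\<And>x. x \<in> X \<Longrightarrow> cop X K r x = a * r x" "x0 \<in> X" "r x0 \<noteq> 0"
  shows "cnj a = a"
proof -
  have "ip X w (cop X K r) r = ip X w (\<lambda>x. a * r x + 0 * r x) r"
    using assms(2) by (intro ip_cong) auto
  also have "\<dots> = a * ip X w r r + 0 * ip X w r r" by (rule ip_lin)
  finally have 1: "ip X w (cop X K r) r = a * ip X w r r" by simp
  have "ip X w r (cop X K r) = ip X w r (\<lambda>x. a * r x)"
    using assms(2) by (intro ip_cong) auto
  also have "\<dots> = cnj a * ip X w r r" by (rule ip_scale2)
  finally have 2: "ip X w r (cop X K r) = cnj a * ip X w r r" .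
  have ne: "ip X w r r \<noteq> 0" using ip_self_zero[OF assms(1) _ assms(3)] assms(4) by blast
  have "a * ip X w r r = cnj a * ip X w r r" using 1 2 ip_selfadj[OF assms(1), of r r] by metis
  then show ?thesis using ne by (metis mult_cancel_right)
qed

definition eigdec :: "'a set \<Rightarrow> ('a \<Rightarrow> 'a \<Rightarrow> real) \<Rightarrow> ('a \<Rightarrow> complex) \<Rightarrow> bool" where
  "eigdec X K y \<longleftrightarrow> (\<exists>M e. finite M \<and> (\<forall>\<mu>\<in>M. \<forall>x\<in>X. cop X K (e \<mu>) x = complex_of_real \<mu> * e \<mu> x)
      \<and> (\<forall>x\<in>X. y x = (\<Sum>\<mu>\<in>M. e \<mu> x)))"

lemma cop_sum: "cop X K (\<lambda>x. \<Sum>\<mu>\<in>M. f \<mu> x) x = (\<Sum>\<mu>\<in>M. cop X K (f \<mu>) x)"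
  unfolding cop_def by (simp add: sum_distrib_left) (rule sum.swap)

lemma cop_diff: "cop X K (\<lambda>x. u x - v x) x = cop X K u x - cop X K v x"
  unfolding cop_def by (simp add: sum_subtractf algebra_simps)

lemma cop_div: "cop X K (\<lambda>x. u x / c) x = cop X K u x / c"
  unfolding cop_def by (simp add: sum_divide_distrib)

lemma cop_zero: "(\<And>y. y \<in> X \<Longrightarrow> u y = 0) \<Longrightarrow> cop X K u x = 0"
  unfolding cop_def by simp

lemma decomp_step:
  assumes rk: "rev_kernel X w K" and ed: "eigdec X K (\<lambda>x. cop X K y x - a * y x)"
  shows "eigdec X K y"
proof -
  obtain M e where M: "finite M"
    and eig: "\<And>\<mu> x. \<mu> \<in> M \<Longrightarrow> x \<in> X \<Longrightarrow> cop X K (e \<mu>) x = complex_of_real \<mu> * e \<mu> x"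
    and dec: "\<And>x. x \<in> X \<Longrightarrow> cop X K y x - a * y x = (\<Sum>\<mu>\<in>M. e \<mu> x)"
    using ed unfolding eigdec_def by blast
  define M1 where "M1 = {\<mu>\<in>M. complex_of_real \<mu> \<noteq> a}"
  define e' where "e' = (\<lambda>\<mu> x. e \<mu> x / (complex_of_real \<mu> - a))"
  define g where "g = (\<lambda>x. y x - (\<Sum>\<mu>\<in>M1. e' \<mu> x))"
  define r where "r = (\<lambda>x. \<Sum>\<mu>\<in>M-M1. e \<mu> x)"
  have fM1: "finite M1" and sub: "M1 \<subseteq> M" using M unfolding M1_def by auto
  have eig': "cop X K (e' \<mu>) x = complex_of_real \<mu> * e' \<mu> x" if "\<mu> \<in> M1" "x \<in> X" for \<mu> x
    using eig[of \<mu> x] that unfolding e'_def M1_def by (simp add: cop_div)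
  have r_eig: "cop X K r x = a * r x" if "x \<in> X" for x
  proof -
    have "cop X K r x = (\<Sum>\<mu>\<in>M-M1. cop X K (e \<mu>) x)" unfolding r_def by (rule cop_sum)
    also have "\<dots> = (\<Sum>\<mu>\<in>M-M1. a * e \<mu> x)"
      using eig that unfolding M1_def by (intro sum.cong) auto
    finally show ?thesis unfolding r_def by (simp add: sum_distrib_left)
  qed
  have g_eq: "cop X K g x - a * g x = r x" if "x \<in> X" for x
  proof -
    have "cop X K g x = cop X K y x - (\<Sum>\<mu>\<in>M1. cop X K (e' \<mu>) x)"
      unfolding g_def by (simp add: cop_diff cop_sum)
    also have "(\<Sum>\<mu>\<in>M1. cop X K (e' \<mu>) x) = (\<Sum>\<mu>\<in>M1. complex_of_real \<mu> * e' \<mu> x)"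
      using eig' that by (intro sum.cong) auto
    finally have "cop X K g x - a * g x = (cop X K y x - a * y x) - (\<Sum>\<mu>\<in>M1. (complex_of_real \<mu> - a) * e' \<mu> x)"
      unfolding g_def by (simp add: algebra_simps sum_subtractf sum_distrib_left)
    also have "(\<Sum>\<mu>\<in>M1. (complex_of_real \<mu> - a) * e' \<mu> x) = (\<Sum>\<mu>\<in>M1. e \<mu> x)"
      unfolding e'_def M1_def by (intro sum.cong) auto
    also have "cop X K y x - a * y x = (\<Sum>\<mu>\<in>M. e \<mu> x)" using dec that by simp
    also have "(\<Sum>\<mu>\<in>M. e \<mu> x) = (\<Sum>\<mu>\<in>M-M1. e \<mu> x) + (\<Sum>\<mu>\<in>M1. e \<mu> x)"
      using sub M by (rule sum.subset_diff)
    finally show ?thesis unfolding r_def by simp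
  qed
  have r0: "r x = 0" if "x \<in> X" for x
  proof (rule ccontr)
    assume "r x \<noteq> 0"
    then have ca: "cnj a = a" using hermitian_real[OF rk r_eig that] by blast
    have "ip X w r r = ip X w (\<lambda>x. 1 * cop X K g x + (- a) * g x) r"
      using g_eq by (intro ip_cong) auto
    also have "\<dots> = 1 * ip X w (cop X K g) r + (- a) * ip X w g r" by (rule ip_lin)
    also have "ip X w (cop X K g) r = ip X w g (cop X K r)" by (rule ip_selfadj[OF rk])
    also have "\<dots> = ip X w g (\<lambda>x. a * r x)" using r_eig by (intro ip_cong) auto
    also have "\<dots> = cnj a * ip X w g r" by (rule ip_scale2)
    finally have "ip X w r r = 0" using ca by simp
    then have "r x = 0" using ip_self_zero[OF rk _ that] by blast
    with \<open>r x \<noteq> 0\<close> show False by simp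
  qed
  have g_eig: "cop X K g x = a * g x" if "x \<in> X" for x
    using g_eq[OF that] r0[OF that] by simp
  show ?thesis
  proof (cases "\<forall>x\<in>X. g x = 0")
    case True
    show ?thesis unfolding eigdec_def
    proof (intro exI conjI)
      show "finite M1" by fact
      show "\<forall>\<mu>\<in>M1. \<forall>x\<in>X. cop X K (e' \<mu>) x = complex_of_real \<mu> * e' \<mu> x" using eig' by blast
      show "\<forall>x\<in>X. y x = (\<Sum>\<mu>\<in>M1. e' \<mu> x)" using True unfolding g_def by auto
    qed
  next
    case False
    then obtain x1 where x1: "x1 \<in> X" "g x1 \<noteq> 0" by auto
    have "cnj a = a" using hermitian_real[OF rk g_eig x1] by blast
    then have "Im (cnj a) = Im a" by simp
    then have "Im a = 0" by simp
    define ra where "ra = Re a"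
    have aR: "complex_of_real ra = a" unfolding ra_def using \<open>Im a = 0\<close> by (simp add: complex_eq_iff)
    have raM1: "ra \<notin> M1" using aR unfolding M1_def by auto
    define e2 where "e2 = (\<lambda>\<mu>. if \<mu> = ra then g else e' \<mu>)"
    show ?thesis unfolding eigdec_def
    proof (intro exI conjI)
      show "finite (insert ra M1)" using fM1 by simp
      show "\<forall>\<mu>\<in>insert ra M1. \<forall>x\<in>X. cop X K (e2 \<mu>) x = complex_of_real \<mu> * e2 \<mu> x"
        using eig' g_eig aR raM1 unfolding e2_def by auto
      show "\<forall>x\<in>X. y x = (\<Sum>\<mu>\<in>insert ra M1. e2 \<mu> x)"
      proof
        fix x assume "x \<in> X"
        have "(\<Sum>\<mu>\<in>insert ra M1. e2 \<mu> x) = g x + (\<Sum>\<mu>\<in>M1. e2 \<mu> x)"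
          using fM1 raM1 by (simp add: e2_def)
        also have "(\<Sum>\<mu>\<in>M1. e2 \<mu> x) = (\<Sum>\<mu>\<in>M1. e' \<mu> x)"
          using raM1 unfolding e2_def by (intro sum.cong) auto
        finally show "y x = (\<Sum>\<mu>\<in>insert ra M1. e2 \<mu> x)" unfolding g_def by simp
      qed
    qed
  qed
qed

lemma annih_dec:
  assumes rk: "rev_kernel X w K"
  shows "(\<forall>x\<in>X. polyop X K (\<Prod>a\<in>#A. [:-a,1:]) y x = 0) \<longrightarrow> eigdec X K y"
proof (induction A arbitrary: y)
  case empty
  show ?case
  proof
    assume "\<forall>x\<in>X. polyop X K (\<Prod>a\<in>#{#}. [:-a,1:]) y x = 0"
    then have "\<forall>x\<in>X. y x = 0" by (simp add: polyop_one)
    then show "eigdec X K y" unfolding eigdec_def by (intro exI[of _ "{}"]) auto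
  qed
next
  case (add a A)
  show ?case
  proof
    assume H: "\<forall>x\<in>X. polyop X K (\<Prod>a\<in>#add_mset a A. [:-a,1:]) y x = 0"
    have "\<forall>x\<in>X. polyop X K (\<Prod>a\<in>#A. [:-a,1:]) (polyop X K [:-a,1:] y) x = 0"
    proof
      fix x assume x: "x \<in> X"
      have "(\<Prod>a\<in>#add_mset a A. [:-a,1:]) = (\<Prod>a\<in>#A. [:-a,1:]) * [:-a,1:]"
        by (simp only: image_mset_add_mset prod_mset.add_mset mult.commute)
      then show "polyop X K (\<Prod>a\<in>#A. [:-a,1:]) (polyop X K [:-a,1:] y) x = 0"
        using H x polyop_mult[of X K "\<Prod>a\<in>#A. [:-a,1:]" "[:-a,1:]" y x] by simp
    qed
    then have "eigdec X K (polyop X K [:-a,1:] y)" using add.IH by blast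
    moreover have "polyop X K [:-a,1:] y = (\<lambda>x. cop X K y x - a * y x)"
      by (rule ext) (rule polyop_lin)
    ultimately show "eigdec X K y" using decomp_step[OF rk, of y a] by simp
  qed
qed

lemma cop_scale: "cop X K (\<lambda>x. c * u x) x = c * cop X K u x"
  unfolding cop_def by (simp add: sum_distrib_left mult_ac)

lemma eig_bound:
  assumes fin: "finite X" and Knn: "\<forall>x\<in>X. \<forall>y\<in>X. K x y \<ge> 0"
    and Kcol: "\<forall>y\<in>X. (\<Sum>x\<in>X. K x y) = 1"
    and eig: "\<forall>x\<in>X. cop X K e x = complex_of_real \<mu> * e x"
    and x0: "x0 \<in> X" "e x0 \<noteq> 0"
  shows "\<bar>\<mu>\<bar> \<le> 1"
proof -
  define T where "T = (\<Sum>x\<in>X. cmod (e x))"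
  have Tpos: "T > 0"
  proof -
    have "cmod (e x0) \<le> T" unfolding T_def using fin x0 by (intro member_le_sum) auto
    moreover have "cmod (e x0) > 0" using x0 by simp
    ultimately show ?thesis by linarith
  qed
  have "\<bar>\<mu>\<bar> * T = (\<Sum>x\<in>X. cmod (cop X K e x))"
    unfolding T_def sum_distrib_left using eig by (intro sum.cong) (auto simp: norm_mult)
  also have "\<dots> \<le> (\<Sum>x\<in>X. \<Sum>y\<in>X. K x y * cmod (e y))"
  proof (intro sum_mono)
    fix x assume x: "x \<in> X"
    have "cmod (cop X K e x) \<le> (\<Sum>y\<in>X. cmod (complex_of_real (K x y) * e y))"
      unfolding cop_def by (rule norm_sum)
    also have "\<dots> = (\<Sum>y\<in>X. K x y * cmod (e y))"
      using Knn x by (intro sum.cong) (auto simp: norm_mult)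
    finally show "cmod (cop X K e x) \<le> (\<Sum>y\<in>X. K x y * cmod (e y))" .
  qed
  also have "\<dots> = (\<Sum>y\<in>X. (\<Sum>x\<in>X. K x y) * cmod (e y))"
    by (subst sum.swap) (simp add: sum_distrib_right)
  also have "\<dots> = T" unfolding T_def using Kcol by (intro sum.cong) auto
  finally have "\<bar>\<mu>\<bar> * T \<le> 1 * T" by simp
  then show ?thesis using Tpos by (simp only: mult_le_cancel_right)
qed

lemma expsum_repr:
  fixes K :: "'a \<Rightarrow> 'a \<Rightarrow> real" and opr :: "('a \<Rightarrow> real) \<Rightarrow> ('a \<Rightarrow> real)" and f z :: "'a \<Rightarrow> real"
  assumes rk: "rev_kernel X w K"
    and Knn: "\<forall>x\<in>X. \<forall>y\<in>X. K x y \<ge> 0"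
    and Kcol: "\<forall>y\<in>X. (\<Sum>x\<in>X. K x y) = 1"
    and opr: "\<And>p t. t \<in> X \<Longrightarrow> opr p t = (\<Sum>s\<in>X. K t s * p s)"
  shows "\<exists>M c. finite M \<and> (\<forall>\<mu>\<in>M. \<bar>\<mu>\<bar> \<le> 1) \<and>
           (\<forall>k. (\<Sum>x\<in>X. f x * (opr ^^ k) z x) = (\<Sum>\<mu>\<in>M. c \<mu> * \<mu> ^ k))"
proof -
  have fin: "finite X" using rk unfolding rev_kernel_def by auto
  define y where "y = (\<lambda>x. complex_of_real (z x))"
  have s1: "(cop X K ^^ k) y x = complex_of_real ((opr ^^ k) z x)" if "x \<in> X" for k x
    using that
  proof (induction k arbitrary: x)
    case 0
    then show ?case by (simp add: y_def)
  next
    case (Suc k)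
    have "(cop X K ^^ Suc k) y x = cop X K ((cop X K ^^ k) y) x" by simp
    also have "\<dots> = cop X K (\<lambda>x. complex_of_real ((opr ^^ k) z x)) x"
      using Suc.IH by (intro cop_cong) auto
    also have "\<dots> = complex_of_real (opr ((opr ^^ k) z) x)"
      unfolding cop_def opr[OF Suc.prems] by simp
    finally show ?case by simp
  qed
  define n where "n = card X"
  obtain c where c: "\<exists>j\<in>{..n}. c j \<noteq> 0" "\<forall>x\<in>X. (\<Sum>j\<in>{..n}. c j * (cop X K ^^ j) y x) = 0"
    using lin_dep[OF fin, of "{..n}" "\<lambda>j. (cop X K ^^ j) y"] unfolding n_def by auto
  define p where "p = (\<Sum>j\<le>n. monom (c j) j)"
  have cp: "coeff p j = (if j \<le> n then c j else 0)" for j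
    unfolding p_def by (simp add: coeff_sum coeff_monom)
  have dp: "degree p \<le> n" by (rule degree_le) (simp add: cp)
  have pnz: "p \<noteq> 0" using c(1) cp by (metis atMost_iff coeff_0)
  have pop: "polyop X K p y x = 0" if "x \<in> X" for x
  proof -
    have "polyop X K p y x = (\<Sum>j\<le>n. coeff p j * (cop X K ^^ j) y x)" by (rule polyop_le[OF dp])
    also have "\<dots> = (\<Sum>j\<le>n. c j * (cop X K ^^ j) y x)" by (intro sum.cong) (auto simp: cp)
    finally show ?thesis using c(2) that by simp
  qed
  define Q where "Q = (\<Prod>a\<in>#proots p. [:-a, 1:])"
  have pQ: "p = smult (lead_coeff p) Q" unfolding Q_def by (rule complex_poly_decompose_multiset[symmetric])
  have Qop: "\<forall>x\<in>X. polyop X K Q y x = 0"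
  proof
    fix x assume x: "x \<in> X"
    have "lead_coeff p * polyop X K Q y x = 0"
      using pop[OF x] pQ polyop_smult[of X K "lead_coeff p" Q y x] by simp
    then show "polyop X K Q y x = 0" using pnz by simp
  qed
  then have "eigdec X K y" using annih_dec[OF rk] unfolding Q_def by blast
  then obtain M e where M: "finite M"
    and eig: "\<And>\<mu> x. \<mu> \<in> M \<Longrightarrow> x \<in> X \<Longrightarrow> cop X K (e \<mu>) x = complex_of_real \<mu> * e \<mu> x"
    and dec: "\<And>x. x \<in> X \<Longrightarrow> y x = (\<Sum>\<mu>\<in>M. e \<mu> x)"
    unfolding eigdec_def by blast
  have s3: "(cop X K ^^ k) y x = (\<Sum>\<mu>\<in>M. complex_of_real \<mu> ^ k * e \<mu> x)" if "x \<in> X" for k x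
    using that
  proof (induction k arbitrary: x)
    case 0
    then show ?case by (simp add: dec)
  next
    case (Suc k)
    have "(cop X K ^^ Suc k) y x = cop X K ((cop X K ^^ k) y) x" by simp
    also have "\<dots> = cop X K (\<lambda>x. \<Sum>\<mu>\<in>M. complex_of_real \<mu> ^ k * e \<mu> x) x"
      using Suc.IH by (intro cop_cong) auto
    also have "\<dots> = (\<Sum>\<mu>\<in>M. complex_of_real \<mu> ^ k * cop X K (e \<mu>) x)"
      by (simp add: cop_sum cop_scale)
    also have "\<dots> = (\<Sum>\<mu>\<in>M. complex_of_real \<mu> ^ Suc k * e \<mu> x)"
      using eig Suc.prems by (intro sum.cong) auto
    finally show ?case .
  qed
  define M' where "M' = {\<mu>\<in>M. \<exists>x\<in>X. e \<mu> x \<noteq> 0}"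
  define cc where "cc = (\<lambda>\<mu>. Re (\<Sum>x\<in>X. complex_of_real (f x) * e \<mu> x))"
  have fM': "finite M'" using M unfolding M'_def by auto
  have bd: "\<forall>\<mu>\<in>M'. \<bar>\<mu>\<bar> \<le> 1"
  proof
    fix \<mu> assume m: "\<mu> \<in> M'"
    then obtain x0 where "x0 \<in> X" "e \<mu> x0 \<noteq> 0" unfolding M'_def by auto
    moreover have "\<forall>x\<in>X. cop X K (e \<mu>) x = complex_of_real \<mu> * e \<mu> x" using eig m unfolding M'_def by auto
    ultimately show "\<bar>\<mu>\<bar> \<le> 1" using eig_bound[OF fin Knn Kcol] by blast
  qed
  have "(\<Sum>x\<in>X. f x * (opr ^^ k) z x) = (\<Sum>\<mu>\<in>M'. cc \<mu> * \<mu> ^ k)" for k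
  proof -
    have "(\<Sum>x\<in>X. f x * (opr ^^ k) z x) = Re (\<Sum>x\<in>X. complex_of_real (f x) * (cop X K ^^ k) y x)"
      by (simp add: Re_sum s1)
    also have "(\<Sum>x\<in>X. complex_of_real (f x) * (cop X K ^^ k) y x)
        = (\<Sum>x\<in>X. complex_of_real (f x) * (\<Sum>\<mu>\<in>M. complex_of_real \<mu> ^ k * e \<mu> x))"
      by (intro sum.cong) (auto simp: s3)
    also have "\<dots> = (\<Sum>\<mu>\<in>M. complex_of_real \<mu> ^ k * (\<Sum>x\<in>X. complex_of_real (f x) * e \<mu> x))"
      by (simp add: sum_distrib_left mult_ac) (rule sum.swap)
    also have "Re \<dots> = (\<Sum>\<mu>\<in>M. cc \<mu> * \<mu> ^ k)"
      unfolding cc_def Re_sum by (intro sum.cong) (auto simp flip: of_real_power)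
    also have "\<dots> = (\<Sum>\<mu>\<in>M'. cc \<mu> * \<mu> ^ k)"
      using M unfolding M'_def cc_def by (intro sum.mono_neutral_right) auto
    finally show ?thesis .
  qed
  then show ?thesis using fM' bd by blast
qed



lemma expsum_asymp:
  fixes d :: "real \<Rightarrow> real" and b :: "nat \<Rightarrow> real"
  assumes fin: "finite N" and N01: "N \<subseteq> {0..1}" and bdef: "\<And>k. b k = (\<Sum>\<nu>\<in>N. d \<nu> * \<nu> ^ k)"
  shows "eventually_const b \<or> (\<exists>C \<nu>0. 0 < \<nu>0 \<and> \<nu>0 < 1 \<and> (\<lambda>k. \<bar>b k - lim b\<bar>) \<sim>[at_top] (\<lambda>k. C * \<nu>0 ^ k))"
proof -
  define L where "L = (if 1 \<in> N then d 1 else 0)"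
  define N2 where "N2 = {\<nu>\<in>N. 0 < \<nu> \<and> \<nu> < 1 \<and> d \<nu> \<noteq> 0}"
  have fN2: "finite N2" using fin unfolding N2_def by auto
  have rep: "b k = L + (\<Sum>\<nu>\<in>N2. d \<nu> * \<nu> ^ k)" if k: "k \<ge> 1" for k
  proof -
    have sub: "N2 \<union> (N \<inter> {1}) \<subseteq> N" unfolding N2_def by auto
    have "b k = (\<Sum>\<nu>\<in>N2 \<union> (N \<inter> {1}). d \<nu> * \<nu> ^ k)"
      unfolding bdef
    proof (rule sum.mono_neutral_right[OF fin sub])
      show "\<forall>i\<in>N - (N2 \<union> N \<inter> {1}). d i * i ^ k = 0"
      proof
        fix i assume i: "i \<in> N - (N2 \<union> N \<inter> {1})"
        then have "0 \<le> i" "i \<le> 1" "i \<noteq> 1" using N01 by auto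
        with i have "i = 0 \<or> d i = 0" unfolding N2_def by auto
        then show "d i * i ^ k = 0" using k by auto
      qed
    qed
    also have "\<dots> = (\<Sum>\<nu>\<in>N2. d \<nu> * \<nu> ^ k) + (\<Sum>\<nu>\<in>N \<inter> {1}. d \<nu> * \<nu> ^ k)"
      by (rule sum.union_disjoint) (use fin fN2 in \<open>auto simp: N2_def\<close>)
    also have "(\<Sum>\<nu>\<in>N \<inter> {1}. d \<nu> * \<nu> ^ k) = L"
      unfolding L_def by (cases "1 \<in> N") auto
    finally show ?thesis by simp
  qed
  have ev: "\<forall>\<^sub>F k in sequentially. b k = L + (\<Sum>\<nu>\<in>N2. d \<nu> * \<nu> ^ k)"
    using rep by (auto simp: eventually_at_top_linorder)
  have conv0: "(\<lambda>k. \<Sum>\<nu>\<in>N2. d \<nu> * \<nu> ^ k) \<longlonglongrightarrow> 0"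
  proof (rule tendsto_null_sum)
    fix \<nu> assume "\<nu> \<in> N2"
    then have "\<bar>\<nu>\<bar> < 1" unfolding N2_def by auto
    then show "(\<lambda>k. d \<nu> * \<nu> ^ k) \<longlonglongrightarrow> 0"
      by (intro tendsto_mult_right_zero LIMSEQ_power_zero) simp
  qed
  have "(\<lambda>k. L + (\<Sum>\<nu>\<in>N2. d \<nu> * \<nu> ^ k)) \<longlonglongrightarrow> L + 0"
    by (intro tendsto_add tendsto_const conv0)
  then have "b \<longlonglongrightarrow> L" using ev by (simp add: tendsto_cong)
  then have limb: "lim b = L" by (rule limI)
  show ?thesis
  proof (cases "N2 = {}")
    case True
    have "eventually_const b" unfolding eventually_const_def
      using rep True by (intro exI[of _ 1]) auto
    then show ?thesis by blast
  next
    case False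
    define \<nu>0 where "\<nu>0 = Max N2"
    have n0: "\<nu>0 \<in> N2" unfolding \<nu>0_def using False fN2 by simp
    have n0p: "0 < \<nu>0" "\<nu>0 < 1" "d \<nu>0 \<noteq> 0" using n0 unfolding N2_def by auto
    have lt: "\<nu> < \<nu>0" "0 < \<nu>" if "\<nu> \<in> N2 - {\<nu>0}" for \<nu>
    proof -
      have "\<nu> \<le> \<nu>0" unfolding \<nu>0_def using that fN2 by auto
      then show "\<nu> < \<nu>0" using that by auto
      show "0 < \<nu>" using that unfolding N2_def by auto
    qed
    define R where "R = (\<lambda>k. 1 + (\<Sum>\<nu>\<in>N2 - {\<nu>0}. (d \<nu> / d \<nu>0) * (\<nu> / \<nu>0) ^ k))"
    have R1: "R \<longlonglongrightarrow> 1 + 0" unfolding R_def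
    proof (intro tendsto_add tendsto_const tendsto_null_sum)
      fix \<nu> assume "\<nu> \<in> N2 - {\<nu>0}"
      with lt[OF this] n0p have "\<bar>\<nu> / \<nu>0\<bar> < 1" by auto
      then show "(\<lambda>k. (d \<nu> / d \<nu>0) * (\<nu> / \<nu>0) ^ k) \<longlonglongrightarrow> 0"
        by (intro tendsto_mult_right_zero LIMSEQ_power_zero) simp
    qed
    have Rabs: "(\<lambda>k. \<bar>R k\<bar>) \<longlonglongrightarrow> \<bar>1\<bar>" using tendsto_rabs[OF R1] by simp
    have eqR: "\<bar>b k - lim b\<bar> / (\<bar>d \<nu>0\<bar> * \<nu>0 ^ k) = \<bar>R k\<bar>" if k: "k \<ge> 1" for k
    proof -
      have pos: "\<nu>0 ^ k > 0" using n0p by simp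
      have "(\<Sum>\<nu>\<in>N2. d \<nu> * \<nu> ^ k) / (d \<nu>0 * \<nu>0 ^ k) = (\<Sum>\<nu>\<in>N2. (d \<nu> / d \<nu>0) * (\<nu> / \<nu>0) ^ k)"
        by (simp add: sum_divide_distrib power_divide)
      also have "\<dots> = (d \<nu>0 / d \<nu>0) * (\<nu>0 / \<nu>0) ^ k + (\<Sum>\<nu>\<in>N2 - {\<nu>0}. (d \<nu> / d \<nu>0) * (\<nu> / \<nu>0) ^ k)"
        using fN2 n0 by (simp add: sum.remove)
      also have "\<dots> = R k" unfolding R_def using n0p by simp
      finally have "(\<Sum>\<nu>\<in>N2. d \<nu> * \<nu> ^ k) / (d \<nu>0 * \<nu>0 ^ k) = R k" .
      moreover have "\<bar>b k - lim b\<bar> / (\<bar>d \<nu>0\<bar> * \<nu>0 ^ k) = \<bar>(\<Sum>\<nu>\<in>N2. d \<nu> * \<nu> ^ k) / (d \<nu>0 * \<nu>0 ^ k)\<bar>"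
        using rep[OF k] limb pos by (simp add: abs_mult)
      ultimately show ?thesis by simp
    qed
    have "(\<lambda>k. \<bar>b k - lim b\<bar> / (\<bar>d \<nu>0\<bar> * \<nu>0 ^ k)) \<longlonglongrightarrow> 1"
    proof -
      have "\<forall>\<^sub>F k in sequentially. \<bar>R k\<bar> = \<bar>b k - lim b\<bar> / (\<bar>d \<nu>0\<bar> * \<nu>0 ^ k)"
        unfolding eventually_at_top_linorder using eqR by (intro exI[of _ 1]) (auto simp: eqR)
      then show ?thesis using Rabs by (simp add: tendsto_cong)
    qed
    then have "(\<lambda>k. \<bar>b k - lim b\<bar>) \<sim>[at_top] (\<lambda>k. \<bar>d \<nu>0\<bar> * \<nu>0 ^ k)"
      by (intro asymp_equivI')
    then show ?thesis using n0p by blast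
  qed
qed

lemma sq_regroup:
  fixes c :: "real \<Rightarrow> real"
  assumes fin: "finite M" and bd: "\<forall>\<mu>\<in>M. \<bar>\<mu>\<bar> \<le> 1" and bdef: "\<And>k. b k = (\<Sum>\<mu>\<in>M. c \<mu> * (\<mu>^2) ^ k)"
  shows "eventually_const b \<or> (\<exists>C \<nu>0. 0 < \<nu>0 \<and> \<nu>0 < 1 \<and> (\<lambda>k. \<bar>b k - lim b\<bar>) \<sim>[at_top] (\<lambda>k. C * \<nu>0 ^ k))"
proof -
  define N where "N = (\<lambda>\<mu>. \<mu>^2) ` M"
  define d where "d = (\<lambda>\<nu>. \<Sum>\<mu>\<in>{x\<in>M. x^2 = \<nu>}. c \<mu>)"
  have fN: "finite N" using fin unfolding N_def by simp
  have N01: "N \<subseteq> {0..1}"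
  proof
    fix \<nu> assume "\<nu> \<in> N"
    then obtain \<mu> where m: "\<mu> \<in> M" "\<nu> = \<mu>^2" unfolding N_def by auto
    have "\<mu>^2 \<le> 1" using bd m(1) by (simp add: abs_square_le_1)
    then show "\<nu> \<in> {0..1}" using m by simp
  qed
  have "b k = (\<Sum>\<nu>\<in>N. d \<nu> * \<nu> ^ k)" for k
  proof -
    have "b k = (\<Sum>\<nu>\<in>N. \<Sum>\<mu>\<in>{x\<in>M. x^2 = \<nu>}. c \<mu> * (\<mu>^2) ^ k)"
      unfolding bdef N_def using fin by (rule sum.image_gen)
    also have "\<dots> = (\<Sum>\<nu>\<in>N. d \<nu> * \<nu> ^ k)"
      unfolding d_def sum_distrib_right by (intro sum.cong refl) auto
    finally show ?thesis .
  qed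
  then show ?thesis by (rule expsum_asymp[OF fN N01])
qed

lemma parity_asymp:
  fixes c :: "real \<Rightarrow> real" and a :: "nat \<Rightarrow> real"
  assumes fin: "finite M" and bd: "\<forall>\<mu>\<in>M. \<bar>\<mu>\<bar> \<le> 1" and adef: "\<And>k. a k = (\<Sum>\<mu>\<in>M. c \<mu> * \<mu> ^ k)"
  shows "(eventually_const (\<lambda>k. a (2*k)) \<or>
          (\<exists>c_e l_e :: real. (\<lambda>k. \<bar>a (2*k) - lim (\<lambda>k. a (2*k))\<bar>) \<sim>[at_top] (\<lambda>k. c_e * l_e ^ (2*k))))
       \<and> (eventually_const (\<lambda>k. a (2*k+1)) \<or>
          (\<exists>c_o l_o :: real. (\<lambda>k. \<bar>a (2*k+1) - lim (\<lambda>k. a (2*k+1))\<bar>) \<sim>[at_top] (\<lambda>k. c_o * l_o ^ (2*k+1))))"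
proof
  have "a (2*k) = (\<Sum>\<mu>\<in>M. c \<mu> * (\<mu>^2) ^ k)" for k
    unfolding adef by (simp add: power_mult)
  from sq_regroup[OF fin bd this]
  show "eventually_const (\<lambda>k. a (2*k)) \<or>
          (\<exists>c_e l_e :: real. (\<lambda>k. \<bar>a (2*k) - lim (\<lambda>k. a (2*k))\<bar>) \<sim>[at_top] (\<lambda>k. c_e * l_e ^ (2*k)))"
  proof (elim disjE exE conjE)
    fix C \<nu>0 assume p: "0 < \<nu>0" and as: "(\<lambda>k. \<bar>a (2*k) - lim (\<lambda>k. a (2*k))\<bar>) \<sim>[at_top] (\<lambda>k. C * \<nu>0 ^ k)"
    have eq: "(\<lambda>k. C * \<nu>0 ^ k) = (\<lambda>k. C * sqrt \<nu>0 ^ (2*k))"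
      using p by (simp add: power_mult)
    have "(\<lambda>k. \<bar>a (2*k) - lim (\<lambda>k. a (2*k))\<bar>) \<sim>[at_top] (\<lambda>k. C * sqrt \<nu>0 ^ (2*k))"
      using as unfolding eq .
    then show ?thesis by blast
  qed auto
next
  have "a (2*k+1) = (\<Sum>\<mu>\<in>M. (c \<mu> * \<mu>) * (\<mu>^2) ^ k)" for k
    unfolding adef by (intro sum.cong refl) (simp add: power_mult[symmetric] mult_ac)
  from sq_regroup[OF fin bd this]
  show "eventually_const (\<lambda>k. a (2*k+1)) \<or>
          (\<exists>c_o l_o :: real. (\<lambda>k. \<bar>a (2*k+1) - lim (\<lambda>k. a (2*k+1))\<bar>) \<sim>[at_top] (\<lambda>k. c_o * l_o ^ (2*k+1)))"
  proof (elim disjE exE conjE)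
    fix C \<nu>0 assume p: "0 < \<nu>0" and as: "(\<lambda>k. \<bar>a (2*k+1) - lim (\<lambda>k. a (2*k+1))\<bar>) \<sim>[at_top] (\<lambda>k. C * \<nu>0 ^ k)"
    have "C * \<nu>0 ^ k = (C / sqrt \<nu>0) * sqrt \<nu>0 ^ (2*k+1)" for k
    proof -
      have "sqrt \<nu>0 ^ (2*k+1) = \<nu>0 ^ k * sqrt \<nu>0" using p by (simp add: power_mult)
      then show ?thesis using p by simp
    qed
    then have eq: "(\<lambda>k. C * \<nu>0 ^ k) = (\<lambda>k. (C / sqrt \<nu>0) * sqrt \<nu>0 ^ (2*k+1))" by (rule ext)
    have "(\<lambda>k. \<bar>a (2*k+1) - lim (\<lambda>k. a (2*k+1))\<bar>) \<sim>[at_top] (\<lambda>k. (C / sqrt \<nu>0) * sqrt \<nu>0 ^ (2*k+1))"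
      using as unfolding eq .
    then show ?thesis by blast
  qed auto
qed



lemma walk_step_one: "walk_step V E 1 p = p"
  by (rule ext) (simp add: walk_step_def sum.neutral)

lemma walk_dist_one: "walk_dist V E 1 v k = (\<lambda>t. if t = v then 1 else 0)"
  unfolding walk_dist_def walk_step_one[abs_def] by (induction k) auto

lemma wasserstein_point:
  assumes fin: "finite V" and vV: "v \<in> V" and nn: "\<forall>x\<in>V. \<mu> x \<ge> 0" and one: "(\<Sum>x\<in>V. \<mu> x) = 1"
  shows "wasserstein V E \<mu> (\<lambda>t. if t = v then 1 else 0) = (\<Sum>x\<in>V. \<mu> x * real (gdist E x v))"
proof -
  let ?\<nu> = "\<lambda>t. if t = v then 1 else (0::real)"
  let ?c = "(\<Sum>x\<in>V. \<mu> x * real (gdist E x v))"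
  have cost: "(\<Sum>x\<in>V. \<Sum>y\<in>V. \<pi> x y * real (gdist E x y)) = ?c" if cp: "coupling V \<mu> ?\<nu> \<pi>" for \<pi>
  proof -
    have pnn: "\<And>x y. x \<in> V \<Longrightarrow> y \<in> V \<Longrightarrow> \<pi> x y \<ge> 0"
      and row: "\<And>x. x \<in> V \<Longrightarrow> (\<Sum>y\<in>V. \<pi> x y) = \<mu> x"
      and col: "\<And>y. y \<in> V \<Longrightarrow> (\<Sum>x\<in>V. \<pi> x y) = ?\<nu> y"
      using cp unfolding coupling_def by auto
    have z: "\<pi> x y = 0" if "x \<in> V" "y \<in> V" "y \<noteq> v" for x y
    proof -
      have "(\<Sum>x\<in>V. \<pi> x y) = 0" using col[OF that(2)] that(3) by simp
      then have "\<forall>x\<in>V. \<pi> x y = 0" using sum_nonneg_eq_0_iff[OF fin, of "\<lambda>x. \<pi> x y"] pnn that(2) by blast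
      then show ?thesis using that(1) by blast
    qed
    have inner: "(\<Sum>y\<in>V. \<pi> x y * real (gdist E x y)) = \<pi> x v * real (gdist E x v)"
         "(\<Sum>y\<in>V. \<pi> x y) = \<pi> x v" if "x \<in> V" for x
    proof -
      show "(\<Sum>y\<in>V. \<pi> x y * real (gdist E x y)) = \<pi> x v * real (gdist E x v)"
        using z[OF that] vV fin by (subst sum.remove[OF fin vV]) (auto intro!: sum.neutral)
      show "(\<Sum>y\<in>V. \<pi> x y) = \<pi> x v"
        using z[OF that] vV fin by (subst sum.remove[OF fin vV]) (auto intro!: sum.neutral)
    qed
    have "(\<Sum>x\<in>V. \<Sum>y\<in>V. \<pi> x y * real (gdist E x y)) = (\<Sum>x\<in>V. \<pi> x v * real (gdist E x v))"
      using inner(1) by (rule sum.cong[OF refl])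
    also have "\<dots> = ?c" using inner(2) row by (intro sum.cong refl) metis
    finally show ?thesis .
  qed
  define \<pi>0 where "\<pi>0 = (\<lambda>x y. if y = v then \<mu> x else 0)"
  have "coupling V \<mu> ?\<nu> \<pi>0"
    unfolding coupling_def \<pi>0_def using nn one fin vV by (auto simp: sum.delta)
  then have "{(\<Sum>x\<in>V. \<Sum>y\<in>V. \<pi> x y * real (gdist E x y)) | \<pi>. coupling V \<mu> ?\<nu> \<pi>} = {?c}"
  proof (intro equalityI subsetI)
    fix a assume "a \<in> {(\<Sum>x\<in>V. \<Sum>y\<in>V. \<pi> x y * real (gdist E x y)) | \<pi>. coupling V \<mu> ?\<nu> \<pi>}"
    then show "a \<in> {?c}" using cost by auto
  next
    fix a assume "a \<in> {?c}"
    then have a: "a = ?c" by simp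
    show "a \<in> {(\<Sum>x\<in>V. \<Sum>y\<in>V. \<pi> x y * real (gdist E x y)) | \<pi>. coupling V \<mu> ?\<nu> \<pi>}"
      unfolding a using cost[OF \<open>coupling V \<mu> ?\<nu> \<pi>0\<close>] \<open>coupling V \<mu> ?\<nu> \<pi>0\<close>
      by (intro CollectI exI[of _ \<pi>0] conjI) simp_all
  qed
  then show ?thesis unfolding wasserstein_def by simp
qed

theorem lemma7p1:
  fixes V :: "'a set" and E :: "'a \<Rightarrow> 'a \<Rightarrow> bool" and u v :: 'a and \<alpha> \<beta> :: real
  assumes "simple_graph V E" and "connected_graph V E"
    and "u \<in> V" and "v \<in> V"
    and "0 \<le> \<alpha>" and "\<alpha> \<le> 1" and "0 \<le> \<beta>" and "\<beta> \<le> 1" and "\<alpha> \<le> \<beta>"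
    and "\<beta> = 1"
  shows "(eventually_const (\<lambda>k. W V E u v \<alpha> \<beta> (2*k)) \<or>
          (\<exists>c_e l_e :: real. (\<lambda>k. \<bar>W V E u v \<alpha> \<beta> (2*k) - lim (\<lambda>k. W V E u v \<alpha> \<beta> (2*k))\<bar>)
              \<sim>[at_top] (\<lambda>k. c_e * l_e ^ (2*k))))
       \<and> (eventually_const (\<lambda>k. W V E u v \<alpha> \<beta> (2*k+1)) \<or>
          (\<exists>c_o l_o :: real. (\<lambda>k. \<bar>W V E u v \<alpha> \<beta> (2*k+1) - lim (\<lambda>k. W V E u v \<alpha> \<beta> (2*k+1))\<bar>)
              \<sim>[at_top] (\<lambda>k. c_o * l_o ^ (2*k+1))))"
proof -
  have finV: "finite V" and Ein: "\<And>x y. E x y \<Longrightarrow> x \<in> V \<and> y \<in> V"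
    and Esym: "\<And>x y. E x y \<Longrightarrow> E y x" and Eirr: "\<And>x. \<not> E x x"
    using assms(1) unfolding simple_graph_def by auto
  have conn: "\<And>x y. x \<in> V \<Longrightarrow> y \<in> V \<Longrightarrow> E\<^sup>*\<^sup>* x y"
    using assms(2) unfolding connected_graph_def by auto
  have b1: "\<beta> = 1" by fact
  show ?thesis
  proof (cases "\<forall>x\<in>V. deg V E x > 0")
    case True
    define K where "K = (\<lambda>t s. (if t = s then \<alpha> else 0) + (if E s t then (1 - \<alpha>) / real (deg V E s) else 0))"
    define w where "w = (\<lambda>t. 1 / real (deg V E t))"
    have rk: "rev_kernel V w K"
      unfolding rev_kernel_def
    proof (intro conjI ballI)
      show "finite V" by fact
      show "0 < w x" if "x \<in> V" for x using True that unfolding w_def by auto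
      show "w x * K x y = w y * K y x" if "x \<in> V" "y \<in> V" for x y
        unfolding w_def K_def using Esym[of x y] Esym[of y x] by auto
    qed
    have Knn: "\<forall>x\<in>V. \<forall>y\<in>V. K x y \<ge> 0" unfolding K_def using assms(5,6) by auto
    have Kcol: "\<forall>s\<in>V. (\<Sum>t\<in>V. K t s) = 1"
    proof
      fix s assume s: "s \<in> V"
      have "(\<Sum>t\<in>V. K t s) = (\<Sum>t\<in>V. if t = s then \<alpha> else 0) + (\<Sum>t\<in>V. if E s t then (1 - \<alpha>) / real (deg V E s) else 0)"
        unfolding K_def by (rule sum.distrib)
      also have "(\<Sum>t\<in>V. if t = s then \<alpha> else 0) = \<alpha>" using s finV by simp
      also have "(\<Sum>t\<in>V. if E s t then (1 - \<alpha>) / real (deg V E s) else 0)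
          = (\<Sum>t\<in>{t\<in>V. E s t}. (1 - \<alpha>) / real (deg V E s))"
        using finV by (rule sum.inter_filter[symmetric])
      also have "\<dots> = real (deg V E s) * ((1 - \<alpha>) / real (deg V E s))" by (simp add: deg_def)
      also have "\<dots> = 1 - \<alpha>" using True s by simp
      finally show "(\<Sum>t\<in>V. K t s) = 1" by simp
    qed
    have opr: "walk_step V E \<alpha> p t = (\<Sum>s\<in>V. K t s * p s)" if t: "t \<in> V" for p t
    proof -
      have "(\<Sum>s\<in>V. K t s * p s) = (\<Sum>s\<in>V. if t = s then \<alpha> * p s else 0) + (\<Sum>s\<in>V. if E s t then (1 - \<alpha>) / real (deg V E s) * p s else 0)"
        unfolding K_def sum.distrib[symmetric] by (intro sum.cong) (auto simp: Eirr)
      also have "(\<Sum>s\<in>V. if t = s then \<alpha> * p s else 0) = \<alpha> * p t" using t finV by simp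
      finally show ?thesis unfolding walk_step_def by simp
    qed
    have mass: "(\<forall>t\<in>V. walk_dist V E \<alpha> u k t \<ge> 0) \<and> (\<Sum>t\<in>V. walk_dist V E \<alpha> u k t) = 1" for k
    proof (induction k)
      case 0
      then show ?case using assms(3) finV by (simp add: walk_dist_def)
    next
      case (Suc k)
      let ?p = "walk_dist V E \<alpha> u k"
      have eq: "walk_dist V E \<alpha> u (Suc k) = walk_step V E \<alpha> ?p" by (simp add: walk_dist_def)
      have "\<forall>t\<in>V. walk_step V E \<alpha> ?p t \<ge> 0"
        using Suc.IH Knn by (auto simp: opr intro!: sum_nonneg)
      moreover have "(\<Sum>t\<in>V. walk_step V E \<alpha> ?p t) = 1"
      proof -
        have "(\<Sum>t\<in>V. walk_step V E \<alpha> ?p t) = (\<Sum>t\<in>V. \<Sum>s\<in>V. K t s * ?p s)"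
          by (intro sum.cong) (auto simp: opr)
        also have "\<dots> = (\<Sum>s\<in>V. (\<Sum>t\<in>V. K t s) * ?p s)"
          by (subst sum.swap) (simp add: sum_distrib_right)
        also have "\<dots> = (\<Sum>s\<in>V. ?p s)" using Kcol by (intro sum.cong) auto
        finally show ?thesis using Suc.IH by simp
      qed
      ultimately show ?case unfolding eq by blast
    qed
    have Wk: "W V E u v \<alpha> \<beta> k = (\<Sum>x\<in>V. real (gdist E x v) * (walk_step V E \<alpha> ^^ k) (\<lambda>t. if t = u then 1 else 0) x)" for k
    proof -
      have "W V E u v \<alpha> \<beta> k = (\<Sum>x\<in>V. walk_dist V E \<alpha> u k x * real (gdist E x v))"
        unfolding W_def b1 walk_dist_one using wasserstein_point[OF finV assms(4)] mass[of k] by blast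
      then show ?thesis unfolding walk_dist_def by (simp add: mult.commute)
    qed
    obtain M c where M: "finite M" "\<forall>\<mu>\<in>M. \<bar>\<mu>\<bar> \<le> 1"
      and rep: "\<forall>k. (\<Sum>x\<in>V. real (gdist E x v) * (walk_step V E \<alpha> ^^ k) (\<lambda>t. if t = u then 1 else 0) x) = (\<Sum>\<mu>\<in>M. c \<mu> * \<mu> ^ k)"
      using expsum_repr[OF rk Knn Kcol opr, of "\<lambda>x. real (gdist E x v)" "\<lambda>t. if t = u then 1 else 0"] by blast
    have "\<And>k. W V E u v \<alpha> \<beta> k = (\<Sum>\<mu>\<in>M. c \<mu> * \<mu> ^ k)" using Wk rep by simp
    from parity_asymp[OF M this] show ?thesis .
  next
    case False
    then obtain x0 where x0: "x0 \<in> V" "deg V E x0 = 0" by auto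
    have noN: "\<not> E x0 t" for t
    proof
      assume "E x0 t"
      then have "t \<in> {t\<in>V. E x0 t}" using Ein by auto
      moreover have "finite {t\<in>V. E x0 t}" using finV by auto
      ultimately have "card {t\<in>V. E x0 t} > 0" by (auto simp: card_gt_0_iff)
      then show False using x0(2) unfolding deg_def by simp
    qed
    have Vx: "y = x0" if "y \<in> V" for y
    proof -
      have "E\<^sup>*\<^sup>* x0 y" using conn[OF x0(1) that] .
      then show ?thesis
      proof (rule converse_rtranclpE)
        assume "x0 = y" then show "y = x0" by simp
      next
        fix z assume "E x0 z" then show "y = x0" using noN by blast
      qed
    qed
    have noE: "\<not> E a b" for a b
    proof
      assume "E a b"
      then have "a = x0" "b = x0" using Ein Vx by blast+
      with \<open>E a b\<close> Eirr show False by simp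
    qed
    have uv: "u = x0" "v = x0" using Vx assms(3,4) by blast+
    have VV: "V = {x0}" using Vx x0(1) by blast
    have ws: "walk_step V E \<gamma> p = (\<lambda>t. \<gamma> * p t)" for \<gamma> p
      by (rule ext) (simp add: walk_step_def noE)
    have wd: "walk_dist V E \<gamma> x0 k = (\<lambda>t. \<gamma> ^ k * (if t = x0 then 1 else 0))" for \<gamma> k
    proof (induction k)
      case 0
      show ?case by (simp add: walk_dist_def)
    next
      case (Suc k)
      have "walk_dist V E \<gamma> x0 (Suc k) = walk_step V E \<gamma> (walk_dist V E \<gamma> x0 k)"
        by (simp add: walk_dist_def)
      also have "\<dots> = (\<lambda>t. \<gamma> * walk_dist V E \<gamma> x0 k t)" by (rule ws)
      finally show ?case unfolding Suc.IH by (simp add: mult_ac)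
    qed
    have pw: "\<alpha> ^ k = 1 \<longleftrightarrow> \<alpha> = 1" if "k \<ge> 1" for k
      using power_eq_iff_eq_base[of k \<alpha> 1] that assms(5) by simp
    have cp: "coupling V (walk_dist V E \<alpha> u k) (walk_dist V E \<beta> v k) \<pi>
        \<longleftrightarrow> coupling V (walk_dist V E \<alpha> u 1) (walk_dist V E \<beta> v 1) \<pi>" if "k \<ge> 1" for k \<pi>
    proof -
      have cs: "coupling V \<mu> \<nu> \<pi> \<longleftrightarrow> (0 \<le> \<pi> x0 x0 \<and> \<pi> x0 x0 = \<mu> x0 \<and> \<pi> x0 x0 = \<nu> x0)" for \<mu> \<nu>
        unfolding VV coupling_def by simp
      show ?thesis unfolding cs uv wd b1 using pw[OF that] by auto
    qed
    have Wc: "W V E u v \<alpha> \<beta> k = W V E u v \<alpha> \<beta> 1" if "k \<ge> 1" for k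
      unfolding W_def wasserstein_def cp[OF that] ..
    have "eventually_const (\<lambda>k. W V E u v \<alpha> \<beta> (2*k))"
      unfolding eventually_const_def
    proof (intro exI[of _ 1] allI impI)
      fix k :: nat assume "k \<ge> 1"
      then have "W V E u v \<alpha> \<beta> (2*k) = W V E u v \<alpha> \<beta> 1" "W V E u v \<alpha> \<beta> (2*1) = W V E u v \<alpha> \<beta> 1"
        using Wc[of "2*k"] Wc[of "2*1"] by auto
      then show "W V E u v \<alpha> \<beta> (2*k) = W V E u v \<alpha> \<beta> (2*1)" by simp
    qed
    moreover have "eventually_const (\<lambda>k. W V E u v \<alpha> \<beta> (2*k+1))"
      unfolding eventually_const_def
    proof (intro exI[of _ 0] allI impI)
      fix k :: nat
      have "W V E u v \<alpha> \<beta> (2*k+1) = W V E u v \<alpha> \<beta> 1" using Wc[of "2*k+1"] by auto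
      then show "W V E u v \<alpha> \<beta> (2*k+1) = W V E u v \<alpha> \<beta> (2*0+1)" by simp
    qed
    ultimately show ?thesis by blast
  qed
qed

end
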